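(* Let $\mathcal{F}$ be a finite family of closed intervals on a line and let $G$ be its intersection graph. Then $\chi_{CF}^{cn}(G)\le 3$.
   Context: The intersection graph of $\mathcal{F}$ has vertex set $\mathcal{F}$, with distinct $s_1,s_2$ adjacent iff $s_1\cap s_2\neq\emptyset$. $\chi_{CF}^{cn}(G)$ is the minimum number of colors in a coloring of $V(G)$ such that for every vertex $v$, the closed neighborhood $N_G[v]=\{v\}\cup\{u:\{u,v\}\in E(G)\}$ contains a vertex whose color differs from the colors of all other vertices of $N_G[v]$. *)

theory Defs
  imports Complex_Main
begin

definition closed_interval :: "real set \<Rightarrow> bool" where
  "closed_interval s \<longleftrightarrow> (\<exists>a b. a \<le> b \<and> s = {a..b})"

text \<open>Graphs are given by a vertex set V and a symmetric irreflexive adjacency E.\<close>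
definition closed_nbhd :: "'a set \<Rightarrow> ('a \<Rightarrow> 'a \<Rightarrow> bool) \<Rightarrow> 'a \<Rightarrow> 'a set" where
  "closed_nbhd V E v = insert v {u \<in> V. E u v}"

definition cf_cn_coloring :: "'a set \<Rightarrow> ('a \<Rightarrow> 'a \<Rightarrow> bool) \<Rightarrow> ('a \<Rightarrow> nat) \<Rightarrow> nat \<Rightarrow> bool" where
  "cf_cn_coloring V E c k \<longleftrightarrow> (\<forall>v\<in>V. c v < k) \<and>
     (\<forall>v\<in>V. \<exists>u\<in>closed_nbhd V E v. \<forall>w\<in>closed_nbhd V E v. w \<noteq> u \<longrightarrow> c w \<noteq> c u)"

definition chi_cf_cn :: "'a set \<Rightarrow> ('a \<Rightarrow> 'a \<Rightarrow> bool) \<Rightarrow> nat" where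
  "chi_cf_cn V E = (LEAST k. \<exists>c. cf_cn_coloring V E c k)"

text \<open>Adjacency of the intersection graph of a family of sets (vertex set = the family).\<close>
definition inter_adj :: "'b set \<Rightarrow> 'b set \<Rightarrow> bool" where
  "inter_adj s1 s2 \<longleftrightarrow> s1 \<noteq> s2 \<and> s1 \<inter> s2 \<noteq> {}"

end

theory Submission
  imports Defs
begin

definition meet :: "('a \<Rightarrow> real) \<Rightarrow> ('a \<Rightarrow> real) \<Rightarrow> 'a \<Rightarrow> 'a \<Rightarrow> bool" where
  "meet l r u v \<longleftrightarrow> l u \<le> r v \<and> l v \<le> r u"

lemma main:
  fixes F :: "'a set" and l r :: "'a \<Rightarrow> real"
  assumes "finite F" "\<forall>s\<in>F. l s \<le> r s"
  shows "\<exists>c. (\<forall>v\<in>F. c v < (3::nat)) \<and>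
     (\<forall>v\<in>F. \<exists>u\<in>F. meet l r u v \<and> c u \<noteq> 0 \<and> (\<forall>w\<in>F. meet l r w v \<and> w \<noteq> u \<longrightarrow> c w \<noteq> c u)) \<and>
     (F \<noteq> {} \<longrightarrow> (\<exists>J\<in>F. c J \<noteq> 0 \<and> l J \<le> Min (r`F) \<and>
        (\<forall>w\<in>F. l w \<le> Min (r`F) \<longrightarrow> w \<noteq> J \<longrightarrow> c w = 0) \<and>
        (\<forall>v\<in>F. l v \<le> Min (r`F) \<longrightarrow> (\<forall>w\<in>F. meet l r w v \<longrightarrow> w \<noteq> J \<longrightarrow> c w \<noteq> c J))))"
  using assms
proof (induction "card F" arbitrary: F rule: less_induct)
  case less
  show ?case
  proof (cases "F = {}")
    case True
    then show ?thesis by auto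
  next
    case ne: False
    define r1 where "r1 = Min (r`F)"
    have r1le: "\<forall>v\<in>F. r1 \<le> r v" using less.prems(1) r1_def by auto
    have "r`F \<noteq> {}" using ne by blast
    then have "Min (r`F) \<in> r`F" using Min_in less.prems(1) by blast
    then obtain s0 where s0: "s0 \<in> F" "r s0 = r1" using r1_def by auto
    define X where "X = {s\<in>F. l s \<le> r1}"
    have s0X: "s0 \<in> X" using s0 less.prems(2) X_def by auto
    have finX: "finite X" using less.prems(1) X_def by auto
    define R where "R = Max (r`X)"
    have "r`X \<noteq> {}" using s0X by blast
    then have "Max (r`X) \<in> r`X" using Max_in finX by blast
    then obtain J where J: "J \<in> X" "r J = R" using R_def by auto
    have JF: "J \<in> F" and lJ: "l J \<le> r1" using J X_def by auto
    have XR: "\<forall>s\<in>F. l s \<le> r1 \<longrightarrow> r s \<le> R" using finX R_def X_def by auto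
    define F2 where "F2 = {s\<in>F. R < r s}"
    have JnF2: "J \<notin> F2" using J F2_def by auto
    have F2sub: "F2 \<subseteq> F" using F2_def by auto
    have lt: "card F2 < card F"
      using psubset_card_mono[OF less.prems(1)] F2sub JnF2 JF by blast
    have finF2: "finite F2" using less.prems(1) F2_def by auto
    have meetJ: "\<forall>v\<in>F. r v \<le> R \<longrightarrow> meet l r J v"
    proof (intro ballI impI)
      fix v assume v: "v \<in> F" "r v \<le> R"
      have "l J \<le> r v" using lJ r1le v(1) by (meson order_trans)
      moreover have "l v \<le> r J" using less.prems(2) v J(2) by (metis order_trans)
      ultimately show "meet l r J v" unfolding meet_def by simp
    qed
    have p2: "\<forall>s\<in>F2. l s \<le> r s" using less.prems(2) F2sub by blast
    from less.hyps[OF lt finF2 p2] obtain c2 where cc2: "(\<forall>v\<in>F2. c2 v < (3::nat)) \<and> (\<forall>v\<in>F2. \<exists>u\<in>F2. meet l r u v \<and> c2 u \<noteq> 0 \<and> (\<forall>w\<in>F2. meet l r w v \<and> w \<noteq> u \<longrightarrow> c2 w \<noteq> c2 u)) \<and> (F2 \<noteq> {} \<longrightarrow> (\<exists>J\<in>F2. c2 J \<noteq> 0 \<and> l J \<le> Min (r`F2) \<and>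
        (\<forall>w\<in>F2. l w \<le> Min (r`F2) \<longrightarrow> w \<noteq> J \<longrightarrow> c2 w = 0) \<and>
        (\<forall>v\<in>F2. l v \<le> Min (r`F2) \<longrightarrow> (\<forall>w\<in>F2. meet l r w v \<longrightarrow> w \<noteq> J \<longrightarrow> c2 w \<noteq> c2 J))))"
      by (rule exE)
    have c2a: "\<forall>v\<in>F2. c2 v < (3::nat)" using cc2 by (rule conjunct1)
    have c2b: "\<forall>v\<in>F2. \<exists>u\<in>F2. meet l r u v \<and> c2 u \<noteq> 0 \<and> (\<forall>w\<in>F2. meet l r w v \<and> w \<noteq> u \<longrightarrow> c2 w \<noteq> c2 u)" using conjunct1[OF conjunct2[OF cc2]] .
    have c2c: "F2 \<noteq> {} \<longrightarrow> (\<exists>J\<in>F2. c2 J \<noteq> 0 \<and> l J \<le> Min (r`F2) \<and>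
        (\<forall>w\<in>F2. l w \<le> Min (r`F2) \<longrightarrow> w \<noteq> J \<longrightarrow> c2 w = 0) \<and>
        (\<forall>v\<in>F2. l v \<le> Min (r`F2) \<longrightarrow> (\<forall>w\<in>F2. meet l r w v \<longrightarrow> w \<noteq> J \<longrightarrow> c2 w \<noteq> c2 J)))" using conjunct2[OF conjunct2[OF cc2]] .
    show ?thesis
    proof (cases "F2 = {}")
      case True
      have allR: "\<forall>v\<in>F. r v \<le> R"
      proof
        fix v assume "v \<in> F"
        then have "v \<notin> F2" using True by simp
        then show "r v \<le> R" using \<open>v \<in> F\<close> unfolding F2_def by simp
      qed
      define c where "c = (\<lambda>s. if s = J then (1::nat) else 0)"
      have A: "\<forall>v\<in>F. c v < 3" by (simp add: c_def)
      have B: "\<forall>v\<in>F. \<exists>u\<in>F. meet l r u v \<and> c u \<noteq> 0 \<and> (\<forall>w\<in>F. meet l r w v \<and> w \<noteq> u \<longrightarrow> c w \<noteq> c u)"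
        using allR meetJ JF by (auto simp: c_def)
      have C: "\<exists>J\<in>F. c J \<noteq> 0 \<and> l J \<le> Min (r`F) \<and>
        (\<forall>w\<in>F. l w \<le> Min (r`F) \<longrightarrow> w \<noteq> J \<longrightarrow> c w = 0) \<and>
        (\<forall>v\<in>F. l v \<le> Min (r`F) \<longrightarrow> (\<forall>w\<in>F. meet l r w v \<longrightarrow> w \<noteq> J \<longrightarrow> c w \<noteq> c J))"
        using JF lJ r1_def by (auto simp: c_def)
      have D: "F \<noteq> {} \<longrightarrow> (\<exists>J\<in>F. c J \<noteq> 0 \<and> l J \<le> Min (r`F) \<and>
        (\<forall>w\<in>F. l w \<le> Min (r`F) \<longrightarrow> w \<noteq> J \<longrightarrow> c w = 0) \<and>
        (\<forall>v\<in>F. l v \<le> Min (r`F) \<longrightarrow> (\<forall>w\<in>F. meet l r w v \<longrightarrow> w \<noteq> J \<longrightarrow> c w \<noteq> c J)))"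
        using C by (rule impI)
      show ?thesis by (rule exI[of _ c], intro conjI A B D)
    next
      case ne2: False
      define r2 where "r2 = Min (r`F2)"
      have Rr2: "R < r2"
        using ne2 finF2 r2_def F2_def by auto
      have r2le: "\<forall>v\<in>F2. r2 \<le> r v" using finF2 r2_def by auto
      obtain J2 where J2: "J2 \<in> F2" "c2 J2 \<noteq> 0" "l J2 \<le> r2"
        and J2z: "\<forall>w\<in>F2. l w \<le> r2 \<longrightarrow> w \<noteq> J2 \<longrightarrow> c2 w = 0"
        and J2u: "\<forall>v\<in>F2. l v \<le> r2 \<longrightarrow> (\<forall>w\<in>F2. meet l r w v \<longrightarrow> w \<noteq> J2 \<longrightarrow> c2 w \<noteq> c2 J2)"
        using c2c ne2 r2_def by blast
      define b where "b = c2 J2"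
      have b12: "b = 1 \<or> b = 2" using c2a J2 b_def by fastforce
      define a where "a = 3 - b"
      have ab: "a \<noteq> b" "a \<noteq> 0" "a < 3" using b12 a_def by auto
      define c where "c = (\<lambda>s. if s = J then a else if s \<in> F2 then c2 s else 0)"
      have cF2: "\<forall>s\<in>F2. c s = c2 s" using JnF2 c_def by auto
      have A: "\<forall>v\<in>F. c v < 3" using c2a ab by (auto simp: c_def)
      have key: "\<forall>v\<in>F. r v \<le> R \<longrightarrow> (\<forall>w\<in>F. meet l r w v \<longrightarrow> w \<noteq> J \<longrightarrow> c w \<noteq> a)"
      proof (intro ballI impI)
        fix v w assume v: "v \<in> F" "r v \<le> R" and w: "w \<in> F" "meet l r w v" "w \<noteq> J"
        show "c w \<noteq> a"
        proof (cases "w \<in> F2")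
          case True
          have "l w \<le> r2" using w v Rr2 unfolding meet_def by linarith
          then have "c2 w = 0 \<or> w = J2" using J2z True by blast
          then show ?thesis using cF2 True ab b_def by auto
        next
          case False
          then show ?thesis using w ab by (auto simp: c_def)
        qed
      qed
      have B: "\<forall>v\<in>F. \<exists>u\<in>F. meet l r u v \<and> c u \<noteq> 0 \<and> (\<forall>w\<in>F. meet l r w v \<and> w \<noteq> u \<longrightarrow> c w \<noteq> c u)"
      proof
        fix v assume v: "v \<in> F"
        show "\<exists>u\<in>F. meet l r u v \<and> c u \<noteq> 0 \<and> (\<forall>w\<in>F. meet l r w v \<and> w \<noteq> u \<longrightarrow> c w \<noteq> c u)"
        proof (cases "v \<in> F2")
          case False
          then have "r v \<le> R" using v F2_def by auto
          then show ?thesis using key v meetJ JF ab by (auto simp: c_def)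
        next
          case vF2: True
          show ?thesis
          proof (cases "l v \<le> R")
            case True
            have lv: "l v \<le> r2" using True Rr2 by linarith
            have m: "meet l r J2 v" using J2 r2le vF2 lv Rr2 True r2le
              unfolding meet_def by (meson less_eq_real_def order_trans)
            have "\<forall>w\<in>F. meet l r w v \<and> w \<noteq> J2 \<longrightarrow> c w \<noteq> c J2"
            proof (intro ballI impI)
              fix w assume w: "w \<in> F" "meet l r w v \<and> w \<noteq> J2"
              have cJ2: "c J2 = b" using cF2 J2 b_def by auto
              show "c w \<noteq> c J2"
              proof (cases "w \<in> F2")
                case True
                then show ?thesis using J2u vF2 lv w cF2 J2(1) by auto
              next
                case False
                then show ?thesis using cJ2 ab J2 b_def by (auto simp: c_def)
              qed
            qed
            then show ?thesis using m J2 F2sub cF2 by auto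
          next
            case False
            then have nJ: "\<not> meet l r J v" using J unfolding meet_def by auto
            obtain u where u: "u \<in> F2" "meet l r u v" "c2 u \<noteq> 0"
              "\<forall>w\<in>F2. meet l r w v \<and> w \<noteq> u \<longrightarrow> c2 w \<noteq> c2 u"
              using c2b vF2 by blast
            have "\<forall>w\<in>F. meet l r w v \<and> w \<noteq> u \<longrightarrow> c w \<noteq> c u"
            proof (intro ballI impI)
              fix w assume w: "w \<in> F" "meet l r w v \<and> w \<noteq> u"
              show "c w \<noteq> c u"
              proof (cases "w \<in> F2")
                case True
                then show ?thesis using u w cF2 by auto
              next
                case False
                then have "w \<noteq> J" using nJ w by auto
                then show ?thesis using False u cF2 by (auto simp: c_def)
              qed
            qed
            then show ?thesis using u F2sub cF2 by auto
          qed
        qed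
      qed
      have C: "\<exists>J\<in>F. c J \<noteq> 0 \<and> l J \<le> Min (r`F) \<and>
        (\<forall>w\<in>F. l w \<le> Min (r`F) \<longrightarrow> w \<noteq> J \<longrightarrow> c w = 0) \<and>
        (\<forall>v\<in>F. l v \<le> Min (r`F) \<longrightarrow> (\<forall>w\<in>F. meet l r w v \<longrightarrow> w \<noteq> J \<longrightarrow> c w \<noteq> c J))"
      proof -
        have c1: "c J \<noteq> 0" using ab by (simp add: c_def)
        have c2: "l J \<le> Min (r`F)" using lJ r1_def by simp
        have c3: "\<forall>w\<in>F. l w \<le> Min (r`F) \<longrightarrow> w \<noteq> J \<longrightarrow> c w = 0"
        proof (intro ballI impI)
          fix w assume w: "w \<in> F" "l w \<le> Min (r`F)" "w \<noteq> J"
          have "r w \<le> R" using XR w r1_def by simp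
          then have "w \<notin> F2" by (simp add: F2_def)
          then show "c w = 0" using w by (simp add: c_def)
        qed
        have c4: "\<forall>v\<in>F. l v \<le> Min (r`F) \<longrightarrow> (\<forall>w\<in>F. meet l r w v \<longrightarrow> w \<noteq> J \<longrightarrow> c w \<noteq> c J)"
        proof (intro ballI impI)
          fix v w assume v: "v \<in> F" "l v \<le> Min (r`F)" and w: "w \<in> F" "meet l r w v" "w \<noteq> J"
          have "r v \<le> R" using XR v r1_def by simp
          then have "c w \<noteq> a" using key v w by blast
          then show "c w \<noteq> c J" by (simp add: c_def)
        qed
        show ?thesis using c1 c2 c3 c4 JF by blast
      qed
      have D: "F \<noteq> {} \<longrightarrow> (\<exists>J\<in>F. c J \<noteq> 0 \<and> l J \<le> Min (r`F) \<and>
        (\<forall>w\<in>F. l w \<le> Min (r`F) \<longrightarrow> w \<noteq> J \<longrightarrow> c w = 0) \<and>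
        (\<forall>v\<in>F. l v \<le> Min (r`F) \<longrightarrow> (\<forall>w\<in>F. meet l r w v \<longrightarrow> w \<noteq> J \<longrightarrow> c w \<noteq> c J)))"
        using C by (rule impI)
      show ?thesis by (rule exI[of _ c], intro conjI A B D)
    qed
  qed
qed

theorem lemmaA1:
  fixes F :: "real set set"
  assumes "finite F"
    and "\<forall>s\<in>F. closed_interval s"
  shows "chi_cf_cn F inter_adj \<le> 3"
proof -
  have iv: "\<forall>s\<in>F. s = {Inf s..Sup s} \<and> Inf s \<le> Sup s"
    using assms(2) unfolding closed_interval_def by auto
  have ivle: "\<forall>s\<in>F. Inf s \<le> Sup s" using iv by blast
  have mt: "\<And>u v. u \<in> F \<Longrightarrow> v \<in> F \<Longrightarrow> u \<inter> v \<noteq> {} \<longleftrightarrow> meet Inf Sup u v"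
  proof -
    fix u v assume "u \<in> F" "v \<in> F"
    then obtain a b c d where ab: "u = {a..b}" "v = {c..d}" "a \<le> b" "c \<le> d"
      using iv by metis
    then have "Inf u = a" "Sup u = b" "Inf v = c" "Sup v = d" by auto
    moreover have "u \<inter> v = {max a c..min b d}" using ab by (simp add: Int_atLeastAtMost)
    ultimately show "u \<inter> v \<noteq> {} \<longleftrightarrow> meet Inf Sup u v"
      unfolding meet_def using ab by auto
  qed
  have nb: "\<And>v. v \<in> F \<Longrightarrow> closed_nbhd F inter_adj v = {u\<in>F. meet Inf Sup u v}"
  proof -
    fix v assume v: "v \<in> F"
    have "meet Inf Sup v v" using iv v unfolding meet_def by auto
    then show "closed_nbhd F inter_adj v = {u\<in>F. meet Inf Sup u v}"
      unfolding closed_nbhd_def inter_adj_def using mt v by auto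
  qed
  from main[OF assms(1) ivle] obtain c where cc:
    "(\<forall>v\<in>F. c v < (3::nat)) \<and> (\<forall>v\<in>F. \<exists>u\<in>F. meet Inf Sup u v \<and> c u \<noteq> 0 \<and> (\<forall>w\<in>F. meet Inf Sup w v \<and> w \<noteq> u \<longrightarrow> c w \<noteq> c u)) \<and> (F \<noteq> {} \<longrightarrow> (\<exists>J\<in>F. c J \<noteq> 0 \<and> Inf J \<le> Min (Sup`F) \<and>
        (\<forall>w\<in>F. Inf w \<le> Min (Sup`F) \<longrightarrow> w \<noteq> J \<longrightarrow> c w = 0) \<and>
        (\<forall>v\<in>F. Inf v \<le> Min (Sup`F) \<longrightarrow> (\<forall>w\<in>F. meet Inf Sup w v \<longrightarrow> w \<noteq> J \<longrightarrow> c w \<noteq> c J))))"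
    by (rule exE)
  have c1: "\<forall>v\<in>F. c v < (3::nat)" using cc by (rule conjunct1)
  have c2: "\<forall>v\<in>F. \<exists>u\<in>F. meet Inf Sup u v \<and> c u \<noteq> 0 \<and> (\<forall>w\<in>F. meet Inf Sup w v \<and> w \<noteq> u \<longrightarrow> c w \<noteq> c u)"
    using conjunct1[OF conjunct2[OF cc]] .
  have "\<forall>v\<in>F. \<exists>u\<in>closed_nbhd F inter_adj v. \<forall>w\<in>closed_nbhd F inter_adj v. w \<noteq> u \<longrightarrow> c w \<noteq> c u"
  proof
    fix v assume v: "v \<in> F"
    obtain u where u: "u \<in> F" "meet Inf Sup u v"
      "\<forall>w\<in>F. meet Inf Sup w v \<and> w \<noteq> u \<longrightarrow> c w \<noteq> c u"
      using c2 v by blast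
    have N: "closed_nbhd F inter_adj v = {u\<in>F. meet Inf Sup u v}" using nb v by blast
    have "u \<in> closed_nbhd F inter_adj v" using N u by blast
    moreover have "\<forall>w\<in>closed_nbhd F inter_adj v. w \<noteq> u \<longrightarrow> c w \<noteq> c u"
      using N u(3) by blast
    ultimately show "\<exists>u\<in>closed_nbhd F inter_adj v. \<forall>w\<in>closed_nbhd F inter_adj v. w \<noteq> u \<longrightarrow> c w \<noteq> c u"
      by blast
  qed
  then have "cf_cn_coloring F inter_adj c 3"
    unfolding cf_cn_coloring_def using c1 by blast
  then have "\<exists>c. cf_cn_coloring F inter_adj c 3" by blast
  then show ?thesis unfolding chi_cf_cn_def by (rule Least_le)
qed

end
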